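(* Fix $0<\delta<1$ and let $\epsilon=\frac12+\frac\delta2$, $\epsilon'=\frac12$, $c=\frac8\delta$. Then for even $n$, $|\mathcal G_n|\ge 2^{\Omega(n^{2-\epsilon}\log n)}$.
   Context: For even $n$, a good graph on $n$ vertices is a bipartite graph with vertex set $[n]$ and parts $\{1,\dots,\frac n2\}$ and $\{\frac n2+1,\dots,n\}$, having exactly $\lfloor(\frac n2)^{2-\epsilon}\rfloor$ edges, such that every induced subgraph with at most $(\frac n2)^{\epsilon'}$ vertices has a vertex of degree less than $c$ (within that subgraph). $\mathcal G_n$ denotes the set of good graphs on $n$ vertices. *)

theory Defs
  imports Complex_Main
begin

text \<open>A bipartite graph on vertex set [n] with parts {1..n/2} and {n/2+1..n} is
represented by its edge set E, a set of pairs (u,v) with u in the left part and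
v in the right part.\<close>

definition bip_degree_in :: "(nat \<times> nat) set \<Rightarrow> nat set \<Rightarrow> nat \<Rightarrow> nat" where
  "bip_degree_in E S v = card {w \<in> S. (v, w) \<in> E \<or> (w, v) \<in> E}"

definition good_graph :: "real \<Rightarrow> real \<Rightarrow> real \<Rightarrow> nat \<Rightarrow> (nat \<times> nat) set \<Rightarrow> bool" where
  "good_graph \<epsilon> \<epsilon>' c n E \<longleftrightarrow>
     E \<subseteq> {1..n div 2} \<times> {n div 2 + 1..n} \<and>
     card E = nat \<lfloor>real (n div 2) powr (2 - \<epsilon>)\<rfloor> \<and>
     (\<forall>S. S \<subseteq> {1..n} \<and> S \<noteq> {} \<and> real (card S) \<le> real (n div 2) powr \<epsilon>' \<longrightarrow>
        (\<exists>v\<in>S. real (bip_degree_in E S v) < c))"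

definition good_graphs :: "real \<Rightarrow> real \<Rightarrow> real \<Rightarrow> nat \<Rightarrow> (nat \<times> nat) set set" where
  "good_graphs \<epsilon> \<epsilon>' c n = {E. good_graph \<epsilon> \<epsilon>' c n E}"

end

theory Submission
  imports Defs
begin


lemma pow_le_exp_fact:
  fixes x :: real assumes "0 \<le> x"
  shows "x ^ t \<le> exp x * fact t"
proof -
  have s: "summable (\<lambda>n. x^n /\<^sub>R fact n)" using exp_converges sums_summable by blast
  have "sum (\<lambda>n. x^n /\<^sub>R fact n) {t} \<le> suminf (\<lambda>n. x^n /\<^sub>R fact n)"
    by (rule sum_le_suminf[OF s]) (use assms in auto)
  hence "x^t / fact t \<le> exp x" by (simp add: exp_def divide_inverse mult.commute)
  thus ?thesis by (simp add: divide_le_eq mult.commute)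
qed

lemma choose_ratio:
  fixes K m t :: nat
  assumes "t \<le> m" "m \<le> K"
  shows "real ((K - t) choose (m - t)) \<le> (real m / real K) ^ t * real (K choose m)"
  using assms(1)
proof (induction t)
  case 0 then show ?case by simp
next
  case (Suc t)
  define a where "a = K - Suc t"
  define b where "b = m - Suc t"
  have a1: "Suc a = K - t" and b1: "Suc b = m - t" using Suc.prems assms unfolding a_def b_def by auto
  have eq: "real (K - t) * real (a choose b) = real ((K - t) choose (m - t)) * real (m - t)"
    using Suc_times_binomial_eq[of a b] unfolding a1 b1 by (metis of_nat_mult)
  have Kt: "real (K - t) > 0" using Suc.prems assms by auto
  have "real (a choose b) = real ((K - t) choose (m - t)) * (real (m - t) / real (K - t))"
    using eq Kt by (simp add: field_simps)
  also have "\<dots> \<le> real ((K - t) choose (m - t)) * (real m / real K)"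
  proof (rule mult_left_mono)
    have "real (m - t) * real K \<le> real m * real (K - t)"
      using Suc.prems assms mult_right_mono[of "real m" "real K" "real t"] by (simp add: of_nat_diff algebra_simps)
    thus "real (m - t) / real (K - t) \<le> real m / real K"
      using Kt by (simp add: divide_simps)
  qed simp
  also have "\<dots> \<le> (real m / real K) ^ t * real (K choose m) * (real m / real K)"
    using Suc by (intro mult_right_mono) auto
  finally show ?case by (simp add: a_def b_def mult_ac)
qed

lemma superset_count:
  assumes "finite U" "T \<subseteq> U" "card T = t" "m \<le> card U"
  shows "real (card {E. E \<subseteq> U \<and> card E = m \<and> T \<subseteq> E}) \<le> (real m / real (card U)) ^ t * real (card U choose m)"
proof (cases "t \<le> m")
  case True
  have ft: "finite T" using assms finite_subset by blast
  have inj: "inj_on (\<lambda>E. E - T) {E. E \<subseteq> U \<and> card E = m \<and> T \<subseteq> E}"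
    by (auto simp: inj_on_def)
  have img: "(\<lambda>E. E - T) ` {E. E \<subseteq> U \<and> card E = m \<and> T \<subseteq> E} \<subseteq> {B. B \<subseteq> U - T \<and> card B = m - t}"
  proof
    fix B assume "B \<in> (\<lambda>E. E - T) ` {E. E \<subseteq> U \<and> card E = m \<and> T \<subseteq> E}"
    then obtain E where E: "E \<subseteq> U" "card E = m" "T \<subseteq> E" "B = E - T" by auto
    have "finite E" using E assms finite_subset by blast
    thus "B \<in> {B. B \<subseteq> U - T \<and> card B = m - t}" using E assms ft by (auto simp: card_Diff_subset)
  qed
  have "card {E. E \<subseteq> U \<and> card E = m \<and> T \<subseteq> E} \<le> card {B. B \<subseteq> U - T \<and> card B = m - t}"
    using card_inj_on_le[OF inj img] assms by auto
  also have "\<dots> = (card U - t) choose (m - t)"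
    using n_subsets[of "U - T" "m - t"] assms ft by (simp add: card_Diff_subset)
  finally show ?thesis using choose_ratio[OF True assms(4)] by (meson of_nat_le_iff order_trans)
next
  case False
  have e: "{E. E \<subseteq> U \<and> card E = m \<and> T \<subseteq> E} = {}"
  proof (rule ccontr)
    assume "\<not> ?thesis"
    then obtain E where E: "E \<subseteq> U" "card E = m" "T \<subseteq> E" by auto
    have "finite E" using E assms finite_subset by blast
    hence "card T \<le> card E" using card_mono E by blast
    thus False using False E assms by simp
  qed
  show ?thesis unfolding e by simp
qed

lemma degree_sum:
  assumes "finite S"
  shows "(\<Sum>v\<in>S. bip_degree_in E S v) \<le> 2 * card (E \<inter> (S \<times> S))"
proof -
  have "(\<Sum>v\<in>S. bip_degree_in E S v) \<le> (\<Sum>v\<in>S. card {w\<in>S. (v,w)\<in>E} + card {w\<in>S. (w,v)\<in>E})"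
  proof (rule sum_mono)
    fix v assume "v \<in> S"
    have eq: "{w \<in> S. (v, w) \<in> E \<or> (w, v) \<in> E} = {w\<in>S. (v,w)\<in>E} \<union> {w\<in>S. (w,v)\<in>E}" by auto
    show "bip_degree_in E S v \<le> card {w\<in>S. (v,w)\<in>E} + card {w\<in>S. (w,v)\<in>E}"
      unfolding bip_degree_in_def eq by (rule card_Un_le)
  qed
  also have "\<dots> = (\<Sum>v\<in>S. card {w\<in>S. (v,w)\<in>E}) + (\<Sum>v\<in>S. card {w\<in>S. (w,v)\<in>E})"
    by (simp add: sum.distrib)
  also have "(\<Sum>v\<in>S. card {w\<in>S. (v,w)\<in>E}) = card (E \<inter> (S \<times> S))"
  proof -
    have "Sigma S (\<lambda>v. {w\<in>S. (v,w)\<in>E}) = E \<inter> (S \<times> S)" by auto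
    thus ?thesis using card_SigmaI[of S "\<lambda>v. {w\<in>S. (v,w)\<in>E}"] assms by simp
  qed
  also have "(\<Sum>v\<in>S. card {w\<in>S. (w,v)\<in>E}) = card (E \<inter> (S \<times> S))"
  proof -
    have "Sigma S (\<lambda>v. {w\<in>S. (w,v)\<in>E}) = (\<lambda>(a,b). (b,a)) ` (E \<inter> (S \<times> S))" by auto
    moreover have "inj_on (\<lambda>(a,b). (b,a)) (E \<inter> (S \<times> S))" by (auto simp: inj_on_def)
    ultimately show ?thesis using card_SigmaI[of S "\<lambda>v. {w\<in>S. (w,v)\<in>E}"] assms
      by (simp add: card_image)
  qed
  finally show ?thesis by simp
qed

lemma geom_bound:
  fixes x :: real assumes "0 \<le> x" "x \<le> 1/4"
  shows "(\<Sum>s\<in>{1..r}. x ^ s) \<le> 1/3"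
proof -
  have "(\<Sum>s\<in>{1..r}. x ^ s) \<le> (\<Sum>s\<in>{1..r}. (1/4::real) ^ s)"
    by (rule sum_mono) (use assms in \<open>auto intro: power_mono\<close>)
  also have "(\<Sum>s\<in>{1..r}. (1/4::real) ^ s) = (1 - (1/4)^r) / 3"
  proof (induction r)
    case (Suc r)
    have "(\<Sum>s\<in>{1..Suc r}. (1/4::real) ^ s) = (\<Sum>s\<in>{1..r}. (1/4::real) ^ s) + (1/4)^(Suc r)"
      by simp
    also have "\<dots> = (1 - (1/4)^(Suc r)) / 3" unfolding Suc.IH power_Suc by (simp add: field_simps)
    finally show ?case .
  qed simp
  also have "\<dots> \<le> 1/3" by simp
  finally show ?thesis .
qed

lemma per_s:
  fixes \<delta> :: real and k s m :: nat
  assumes d: "0 < \<delta>" "\<delta> < 1" and k8: "8 \<le> k" and s1: "1 \<le> s" and ss: "real s \<le> sqrt (real k)"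
    and mb: "real m \<le> real k powr (2 - (1/2 + \<delta>/2))"
  defines "t \<equiv> nat \<lceil>8 / \<delta> * real s / 2\<rceil>"
  shows "real ((2*k) choose s) * real ((s*s) choose t) * (real m / real (k*k)) ^ t \<le> (2 / real k) ^ s"
proof -
  have kp: "real k \<ge> 8" using k8 by simp
  have tge: "4 * real s / \<delta> \<le> real t" unfolding t_def using d by (simp add: field_simps)
  have "0 < 4 * real s / \<delta>" using d s1 by simp
  hence tpos: "real t > 0" using tge by linarith
  have b1: "real ((2*k) choose s) \<le> real (2*k) ^ s"
  proof -
    have "((2*k) choose s) * fact s \<le> (2*k)^s" by (rule binomial_fact_pow)
    moreover have "((2*k) choose s) \<le> ((2*k) choose s) * fact s" by simp
    ultimately have "((2*k) choose s) \<le> (2*k)^s" by linarith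
    thus ?thesis by (metis of_nat_le_iff of_nat_power)
  qed
  have b2: "real ((s*s) choose t) \<le> (real (s*s) * exp 1 / real t) ^ t"
  proof -
    have "real ((s*s) choose t) * fact t \<le> real ((s*s)^t)"
      using binomial_fact_pow[of "s*s" t] by (metis of_nat_fact of_nat_le_iff of_nat_mult)
    moreover have "real t ^ t \<le> exp (real t) * fact t" by (rule pow_le_exp_fact) simp
    moreover have "exp (real t) = exp 1 ^ t" by (simp add: exp_of_nat_mult[symmetric])
    ultimately have "real ((s*s) choose t) * fact t * real t ^ t \<le> real ((s*s)^t) * (exp 1 ^ t * fact t)"
      by (intro mult_mono) auto
    hence "real ((s*s) choose t) * real t ^ t \<le> real (s*s)^t * exp 1 ^ t"
      by (simp add: mult_ac)
    thus ?thesis using tpos by (simp add: power_divide power_mult_distrib field_simps)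
  qed
  define q where "q = real (s*s) * exp 1 / real t * (real m / real (k*k))"
  have q0: "0 \<le> q" unfolding q_def by simp
  have qb: "q \<le> real k powr (-\<delta>/2)"
  proof -
    have "q = real s * real s * real m * exp 1 / (real t * real (k*k))" unfolding q_def by simp
    also have "\<dots> \<le> real s * real s * real m * exp 1 / (4 * real s / \<delta> * real (k*k))"
      using tge kp d s1 tpos by (intro divide_left_mono mult_right_mono mult_pos_pos) auto
    also have "\<dots> = real s * real m / real (k*k) * (exp 1 * \<delta> / 4)"
      using d s1 by (simp add: field_simps)
    also have "\<dots> \<le> real s * real m / real (k*k) * 1"
    proof (rule mult_left_mono)
      have "exp 1 * \<delta> \<le> 3 * 1" using exp_le d by (intro mult_mono) auto
      thus "exp 1 * \<delta> / 4 \<le> 1" by simp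
    qed simp
    also have "\<dots> \<le> real k powr (1/2) * real k powr (2 - (1/2 + \<delta>/2)) / real k powr 2"
    proof -
      have "real s * real m \<le> real k powr (1/2) * real k powr (2 - (1/2 + \<delta>/2))"
        using ss mb kp by (intro mult_mono) (auto simp: powr_half_sqrt)
      moreover have "real (k*k) = real k powr 2" using kp by (simp add: powr_realpow power2_eq_square)
      ultimately show ?thesis using kp by (simp add: divide_right_mono)
    qed
    also have "\<dots> = real k powr (1/2 + (2 - (1/2 + \<delta>/2)) - 2)"
      by (simp only: powr_add powr_diff)
    also have "1/2 + (2 - (1/2 + \<delta>/2)) - 2 = -\<delta>/2" by simp
    finally show ?thesis .
  qed
  have "real ((2*k) choose s) * real ((s*s) choose t) * (real m / real (k*k)) ^ t
        \<le> real (2*k) ^ s * (q ^ t)"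
  proof -
    have "real ((s*s) choose t) * (real m / real (k*k)) ^ t \<le> (real (s*s) * exp 1 / real t) ^ t * (real m / real (k*k)) ^ t"
      using b2 by (intro mult_right_mono) auto
    also have "\<dots> = q ^ t" unfolding q_def by (simp only: power_mult_distrib)
    finally have "real ((s*s) choose t) * (real m / real (k*k)) ^ t \<le> q ^ t" .
    hence "real ((2*k) choose s) * (real ((s*s) choose t) * (real m / real (k*k)) ^ t) \<le> real (2*k) ^ s * (q ^ t)"
      using b1 q0 by (intro mult_mono) auto
    thus ?thesis by (simp add: mult_ac)
  qed
  also have "\<dots> \<le> real (2*k) ^ s * (real k powr (-\<delta>/2)) ^ t"
    using qb q0 by (intro mult_left_mono power_mono) auto
  also have "\<dots> = real (2*k) ^ s * real k powr (-\<delta>/2 * real t)"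
    using kp by (simp add: powr_realpow[symmetric] powr_powr)
  also have "\<dots> \<le> real (2*k) ^ s * real k powr (- 2 * real s)"
  proof (rule mult_left_mono)
    have "\<delta> * (4 * real s / \<delta>) \<le> \<delta> * real t" using tge d by (intro mult_left_mono) auto
    hence "4 * real s \<le> \<delta> * real t" using d by simp
    hence "-\<delta>/2 * real t \<le> - 2 * real s" by simp
    thus "real k powr (-\<delta>/2 * real t) \<le> real k powr (- 2 * real s)" using kp by (intro powr_mono) auto
  qed simp
  also have "real (2*k) ^ s * real k powr (- 2 * real s) = (2 / real k) ^ s"
  proof -
    have "real k powr (- 2 * real s) = 1 / real k ^ (2*s)"
      using kp by (simp add: powr_minus powr_realpow[symmetric] powr_powr divide_inverse mult.commute)
    thus ?thesis using kp by (simp add: power_mult power_divide power_mult_distrib power2_eq_square field_simps)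
  qed
  finally show ?thesis .
qed



lemma final_ineq:
  fixes \<delta> :: real and k :: nat
  assumes d: "0 < \<delta>" "\<delta> < 1" and k8: "8 \<le> k"
  defines "m \<equiv> nat \<lfloor>real k powr (2 - (1/2 + \<delta>/2))\<rfloor>"
  shows "m \<le> k * k \<and> 2 powr ((1/32) * real (2*k) powr (2 - (1/2 + \<delta>/2)) * ln (real (2*k)))
           \<le> (2/3) * real ((k*k) choose m)"
proof -
  define a where "a = 2 - (1/2 + \<delta>/2)"
  define A where "A = real k powr a"
  have a1: "1 \<le> a" "a \<le> 3/2" using d unfolding a_def by auto
  have kpos: "real k \<ge> 8" using k8 by simp
  have Ak: "real k \<le> A" unfolding A_def using powr_mono[of 1 a "real k"] a1 kpos by simp
  have Ak2: "A \<le> real k powr 2" unfolding A_def using powr_mono[of a 2 "real k"] a1 kpos by simp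
  have A0: "0 \<le> A" using Ak kpos by linarith
  have fl: "real m = real_of_int \<lfloor>A\<rfloor>" unfolding m_def A_def a_def
    using A0 unfolding A_def a_def by (simp add: of_nat_nat)
  have mA: "real m \<le> A" "A - 1 \<le> real m" unfolding fl using floor_correct[of A] by linarith+
  have mpos: "real m > 0" using mA Ak kpos by linarith
  have mK: "m \<le> k * k"
  proof -
    have h: "A \<le> real k ^ 2" using Ak2 kpos by (simp add: powr_realpow)
    have e: "real (k*k) = real k ^ 2" by (simp add: power2_eq_square)
    have "real m \<le> real (k * k)" using mA h e by linarith
    thus ?thesis by (simp only: of_nat_le_iff)
  qed
  have lnk: "ln (real k) \<ge> 1"
  proof -
    have "exp 1 \<le> real k" using exp_le kpos by linarith
    thus ?thesis using kpos ln_le_cancel_iff[of "exp 1" "real k"] by simp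
  qed
  have ratio: "real k powr (1/2) \<le> real (k*k) / real m"
  proof -
    have "real k powr (1/2) \<le> real k powr (2 - a)" using powr_mono[of "1/2" "2-a" "real k"] a1 kpos by simp
    also have "\<dots> = real k powr 2 / A" unfolding A_def using kpos by (simp add: powr_diff)
    also have "\<dots> \<le> real k powr 2 / real m"
      using mA mpos kpos by (intro divide_left_mono) auto
    also have "\<dots> = real (k*k) / real m" using kpos by (simp add: powr_realpow power2_eq_square)
    finally show ?thesis .
  qed
  have "exp (real m * ln (real k) / 2) = (real k powr (1/2)) ^ m"
    using kpos by (simp add: powr_def exp_of_nat_mult[symmetric] mult_ac)
  also have "\<dots> \<le> (real (k*k) / real m) ^ m"
    using ratio by (intro power_mono) auto
  also have "\<dots> \<le> real ((k*k) choose m)" using binomial_ge_n_over_k_pow_k[OF mK] by simp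
  finally have low: "exp (real m * ln (real k) / 2) \<le> real ((k*k) choose m)" .
  define x where "x = (1/32) * real (2*k) powr a * ln (real (2*k))"
  have p2: "real (2*k) powr a \<le> 4 * A"
  proof -
    have "real (2*k) powr a = 2 powr a * A" unfolding A_def by (simp add: powr_mult)
    also have "\<dots> \<le> 4 * A"
    proof (rule mult_right_mono)
      show "2 powr a \<le> 4" using powr_mono[of a 2 2] a1 by simp
    qed (use Ak kpos in auto)
    finally show ?thesis .
  qed
  have l2: "ln (real (2*k)) \<le> 2 * ln (real k)"
  proof -
    have "ln (real (2*k)) = ln 2 + ln (real k)" using kpos by (simp add: ln_mult)
    moreover have "ln 2 \<le> ln (real k)" using kpos by simp
    ultimately show ?thesis by simp
  qed
  have x0: "0 \<le> x" unfolding x_def using kpos by simp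
  have "x \<le> (1/32) * (4*A) * (2 * ln (real k))"
    unfolding x_def using p2 l2 kpos Ak by (intro mult_mono mult_left_mono) auto
  hence xb: "x \<le> A * ln (real k) / 4" by simp
  have ln2: "ln (2::real) \<le> 1" using ln_2_less_1 by simp
  have "x * ln 2 \<le> x" using x0 ln2 mult_left_mono[of "ln 2" 1 x] by simp
  also have "\<dots> \<le> A * ln (real k) / 4" by (rule xb)
  also have "\<dots> + 1 \<le> (A - 1) * ln (real k) / 2"
  proof -
    have "(1/4 * A - 1/2) * 1 \<le> (1/4 * A - 1/2) * ln (real k)"
      using lnk Ak kpos by (intro mult_left_mono) auto
    thus ?thesis using Ak kpos by (simp add: algebra_simps)
  qed
  also have "\<dots> \<le> real m * ln (real k) / 2"
    using mA lnk by (intro divide_right_mono mult_right_mono) auto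
  finally have key: "x * ln 2 + 1 \<le> real m * ln (real k) / 2" by simp
  have "2 powr x * (3/2) \<le> exp (x * ln 2) * exp 1"
    using exp_ge_add_one_self[of 1] by (simp add: powr_def)
  also have "\<dots> = exp (x * ln 2 + 1)" by (simp add: exp_add)
  also have "\<dots> \<le> exp (real m * ln (real k) / 2)" using key by simp
  finally have "2 powr x \<le> (2/3) * real ((k*k) choose m)" using low by simp
  thus ?thesis using mK unfolding x_def a_def by simp
qed



lemma count_lemma:
  fixes \<delta> :: real and k :: nat
  assumes d: "0 < \<delta>" "\<delta> < 1" and k8: "8 \<le> k"
  defines "m \<equiv> nat \<lfloor>real k powr (2 - (1/2 + \<delta>/2))\<rfloor>"
  assumes mK: "m \<le> k * k"
  shows "(2/3) * real ((k*k) choose m) \<le> real (card (good_graphs (1/2 + \<delta>/2) (1/2) (8/\<delta>) (2*k)))"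
proof -
  define n where "n = 2 * k"
  have nk: "n div 2 = k" unfolding n_def by simp
  define c where "c = 8 / \<delta>"
  define U where "U = {1..k} \<times> {k+1..n}"
  have finU: "finite U" unfolding U_def by simp
  have cardU: "card U = k * k" unfolding U_def n_def by (simp add: card_cartesian_product)
  define A where "A = {E. E \<subseteq> U \<and> card E = m}"
  have finA: "finite A" unfolding A_def using finU by (simp add: finite_subset)
  have cardA: "card A = (k*k) choose m" unfolding A_def using n_subsets[OF finU] cardU by simp
  define B where "B = {E\<in>A. \<exists>S. S \<subseteq> {1..n} \<and> S \<noteq> {} \<and> real (card S) \<le> real k powr (1/2)
                        \<and> (\<forall>v\<in>S. c \<le> real (bip_degree_in E S v))}"
  have BA: "B \<subseteq> A" unfolding B_def by auto
  have good: "A - B \<subseteq> good_graphs (1/2 + \<delta>/2) (1/2) (8/\<delta>) n"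
  proof
    fix E assume E: "E \<in> A - B"
    show "E \<in> good_graphs (1/2 + \<delta>/2) (1/2) (8/\<delta>) n"
      unfolding good_graphs_def good_graph_def mem_Collect_eq nk
    proof (intro conjI allI impI)
      show "E \<subseteq> {1..k} \<times> {k + 1..n}" using E unfolding A_def U_def by auto
      show "card E = nat \<lfloor>real k powr (2 - (1 / 2 + \<delta> / 2))\<rfloor>" using E unfolding A_def m_def by auto
      fix S assume S: "S \<subseteq> {1..n} \<and> S \<noteq> {} \<and> real (card S) \<le> real k powr (1 / 2)"
      show "\<exists>v\<in>S. real (bip_degree_in E S v) < 8 / \<delta>"
      proof (rule ccontr)
        assume "\<not> ?thesis"
        hence "\<forall>v\<in>S. c \<le> real (bip_degree_in E S v)" unfolding c_def by auto
        hence "E \<in> B" using E S unfolding B_def by blast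
        thus False using E by simp
      qed
    qed
  qed
  define r where "r = nat \<lfloor>sqrt (real k)\<rfloor>"
  define tt where "tt s = nat \<lceil>c * real s / 2\<rceil>" for s :: nat
  define Ss where "Ss s = {S. S \<subseteq> {1..n} \<and> card S = s}" for s :: nat
  define Ts where "Ts S s = {T. T \<subseteq> U \<inter> (S \<times> S) \<and> card T = tt s}" for S :: "nat set" and s :: nat
  define Sup where "Sup T = {E. E \<subseteq> U \<and> card E = m \<and> T \<subseteq> E}" for T :: "(nat \<times> nat) set"
  have finSs: "finite (Ss s)" for s unfolding Ss_def by (rule finite_subset[of _ "Pow {1..n}"]) auto
  have finTs: "finite (Ts S s)" for S s unfolding Ts_def
    by (rule finite_subset[of _ "Pow U"]) (use finU in auto)
  have cover: "B \<subseteq> (\<Union>s\<in>{1..r}. \<Union>S\<in>Ss s. \<Union>T\<in>Ts S s. Sup T)"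
  proof
    fix E assume "E \<in> B"
    then obtain S where EA: "E \<in> A" and S: "S \<subseteq> {1..n}" "S \<noteq> {}" "real (card S) \<le> real k powr (1/2)"
        and deg: "\<forall>v\<in>S. c \<le> real (bip_degree_in E S v)" unfolding B_def by blast
    define s where "s = card S"
    have finS: "finite S" using S finite_subset by blast
    have s1: "1 \<le> s" unfolding s_def using finS S by (simp add: Suc_le_eq card_gt_0_iff)
    have sr: "s \<le> r"
    proof -
      have "real s \<le> sqrt (real k)" using S unfolding s_def by (simp add: powr_half_sqrt)
      hence "int s \<le> \<lfloor>sqrt (real k)\<rfloor>" by (simp add: le_floor_iff)
      thus ?thesis unfolding r_def by linarith
    qed
    have "c * real s \<le> (\<Sum>v\<in>S. real (bip_degree_in E S v))"
      using sum_mono[of S "\<lambda>v. c" "\<lambda>v. real (bip_degree_in E S v)"] deg unfolding s_def by (simp add: mult.commute)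
    also have "\<dots> \<le> real (2 * card (E \<inter> (S \<times> S)))"
      using degree_sum[OF finS, of E] by (metis of_nat_le_iff of_nat_sum)
    finally have "c * real s / 2 \<le> real (card (E \<inter> (S \<times> S)))" by simp
    hence tle: "tt s \<le> card (E \<inter> (S \<times> S))" unfolding tt_def by (simp add: nat_ceiling_le_eq)
    obtain T where T: "T \<subseteq> E \<inter> (S \<times> S)" "card T = tt s"
      using obtain_subset_with_card_n[OF tle] by blast
    have "E \<subseteq> U" using EA unfolding A_def by simp
    hence hT: "T \<in> Ts S s" using T unfolding Ts_def by auto
    have hS: "S \<in> Ss s" using S unfolding Ss_def s_def by simp
    have hE: "E \<in> Sup T" using EA T unfolding A_def Sup_def by auto
    have hs: "s \<in> {1..r}" using s1 sr by simp
    show "E \<in> (\<Union>s\<in>{1..r}. \<Union>S\<in>Ss s. \<Union>T\<in>Ts S s. Sup T)"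
      by (rule UN_I[OF hs], rule UN_I[OF hS], rule UN_I[OF hT], rule hE)
  qed
  define X where "X s = (real m / real (k*k)) ^ tt s * real ((k*k) choose m)" for s :: nat
  have supb: "real (card (Sup T)) \<le> X s" if "T \<in> Ts S s" for T S s
  proof -
    have "T \<subseteq> U" "card T = tt s" using that unfolding Ts_def by auto
    thus ?thesis using superset_count[OF finU _ _ , of T "tt s" m] mK cardU unfolding Sup_def X_def by simp
  qed
  have cardTs: "card (Ts S s) \<le> (s*s) choose tt s" if "S \<in> Ss s" for S s
  proof -
    have fS: "finite S" "card S = s" using that unfolding Ss_def by (auto intro: finite_subset)
    have "Ts S s \<subseteq> {T. T \<subseteq> S \<times> S \<and> card T = tt s}" unfolding Ts_def by auto
    hence "card (Ts S s) \<le> card {T. T \<subseteq> S \<times> S \<and> card T = tt s}"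
      by (rule card_mono[rotated]) (use fS in \<open>auto intro: finite_subset[of _ "Pow (S \<times> S)"]\<close>)
    also have "\<dots> = (s*s) choose tt s" using n_subsets[of "S \<times> S" "tt s"] fS by (simp add: card_cartesian_product)
    finally show ?thesis .
  qed
  have cardSs: "card (Ss s) = n choose s" for s
    unfolding Ss_def using n_subsets[of "{1..n}" s] by simp
  have "card B \<le> card (\<Union>s\<in>{1..r}. \<Union>S\<in>Ss s. \<Union>T\<in>Ts S s. Sup T)"
    by (rule card_mono[OF finite_subset[OF _ finA] cover]) (auto simp: Sup_def A_def)
  also have "\<dots> \<le> (\<Sum>s\<in>{1..r}. card (\<Union>S\<in>Ss s. \<Union>T\<in>Ts S s. Sup T))" by (rule card_UN_le) simp
  also have "\<dots> \<le> (\<Sum>s\<in>{1..r}. \<Sum>S\<in>Ss s. card (\<Union>T\<in>Ts S s. Sup T))"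
    by (intro sum_mono card_UN_le finSs)
  also have "\<dots> \<le> (\<Sum>s\<in>{1..r}. \<Sum>S\<in>Ss s. \<Sum>T\<in>Ts S s. card (Sup T))"
    by (intro sum_mono card_UN_le finTs)
  finally have "real (card B) \<le> real (\<Sum>s\<in>{1..r}. \<Sum>S\<in>Ss s. \<Sum>T\<in>Ts S s. card (Sup T))"
    by (simp only: of_nat_le_iff)
  also have "\<dots> = (\<Sum>s\<in>{1..r}. \<Sum>S\<in>Ss s. \<Sum>T\<in>Ts S s. real (card (Sup T)))"
    by (simp only: of_nat_sum)
  also have "\<dots> \<le> (\<Sum>s\<in>{1..r}. \<Sum>S\<in>Ss s. \<Sum>T\<in>Ts S s. X s)"
    by (intro sum_mono supb)
  also have "\<dots> = (\<Sum>s\<in>{1..r}. \<Sum>S\<in>Ss s. real (card (Ts S s)) * X s)" by simp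
  also have "\<dots> \<le> (\<Sum>s\<in>{1..r}. \<Sum>S\<in>Ss s. real ((s*s) choose tt s) * X s)"
    by (intro sum_mono mult_right_mono) (auto simp: cardTs X_def)
  also have "\<dots> = (\<Sum>s\<in>{1..r}. real (n choose s) * real ((s*s) choose tt s) * X s)"
    by (simp add: cardSs mult.assoc)
  also have "\<dots> \<le> (\<Sum>s\<in>{1..r}. (2 / real k) ^ s * real ((k*k) choose m))"
  proof (rule sum_mono)
    fix s assume s: "s \<in> {1..r}"
    have ssq: "real s \<le> sqrt (real k)"
    proof -
      have "s \<le> r" using s by simp
      hence "real s \<le> real r" by simp
      also have "real r \<le> sqrt (real k)" unfolding r_def by simp
      finally show ?thesis .
    qed
    have A0: "0 \<le> real k powr (2 - (1/2 + \<delta>/2))" by simp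
    hence "real m = real_of_int \<lfloor>real k powr (2 - (1/2 + \<delta>/2))\<rfloor>" unfolding m_def
      by (simp add: of_nat_nat)
    hence mb: "real m \<le> real k powr (2 - (1/2 + \<delta>/2))"
      using floor_correct[of "real k powr (2 - (1/2 + \<delta>/2))"] by linarith
    have s1: "1 \<le> s" using s by simp
    have "real (n choose s) * real ((s*s) choose tt s) * (real m / real (k*k)) ^ tt s \<le> (2 / real k) ^ s"
      using per_s[OF d k8 s1 ssq mb] unfolding n_def tt_def c_def by simp
    hence "real (n choose s) * real ((s*s) choose tt s) * (real m / real (k*k)) ^ tt s * real ((k*k) choose m)
       \<le> (2 / real k) ^ s * real ((k*k) choose m)" by (rule mult_right_mono) simp
    thus "real (n choose s) * real ((s*s) choose tt s) * X s \<le> (2 / real k) ^ s * real ((k*k) choose m)"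
      unfolding X_def by (simp add: mult.assoc)
  qed
  also have "\<dots> = (\<Sum>s\<in>{1..r}. (2 / real k) ^ s) * real ((k*k) choose m)" by (simp add: sum_distrib_right)
  also have "\<dots> \<le> (1/3) * real ((k*k) choose m)"
    using k8 by (intro mult_right_mono geom_bound) (auto simp: field_simps)
  finally have cB2: "real (card B) \<le> (1/3) * real ((k*k) choose m)" .
  have "card A = card (A - B) + card B" using finA BA
    by (metis card_Diff_subset card_mono finite_subset le_add_diff_inverse2)
  hence "(2/3) * real ((k*k) choose m) \<le> real (card (A - B))" using cB2 cardA by simp
  also have "\<dots> \<le> real (card (good_graphs (1/2 + \<delta>/2) (1/2) (8/\<delta>) n))"
  proof -
    have "finite (good_graphs (1/2 + \<delta>/2) (1/2) (8/\<delta>) n)"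
      unfolding good_graphs_def good_graph_def
      by (rule finite_subset[of _ "Pow ({1..n div 2} \<times> {n div 2 + 1..n})"]) auto
    thus ?thesis using card_mono[OF _ good] by simp
  qed
  finally show ?thesis unfolding n_def .
qed


theorem mainTheorem6:
  fixes \<delta> :: real
  assumes "0 < \<delta>" and "\<delta> < 1"
  shows "\<exists>C>0. \<exists>N::nat. \<forall>n\<ge>N. even n \<longrightarrow>
           2 powr (C * real n powr (2 - (1/2 + \<delta>/2)) * ln (real n))
             \<le> real (card (good_graphs (1/2 + \<delta>/2) (1/2) (8/\<delta>) n))"
proof (intro exI[of _ "1/32"] conjI exI[of _ "16::nat"] allI impI)
  fix n :: nat assume n16: "16 \<le> n" and ev: "even n"
  then obtain k where nk: "n = 2 * k" by (metis evenE)
  have k8: "8 \<le> k" using n16 nk by simp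
  show "2 powr (1/32 * real n powr (2 - (1/2 + \<delta>/2)) * ln (real n))
             \<le> real (card (good_graphs (1/2 + \<delta>/2) (1/2) (8/\<delta>) n))"
    using final_ineq[OF assms k8] count_lemma[OF assms k8] unfolding nk by (meson order_trans)
qed (simp)

end
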